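(* Consider the system $\frac{dT}{dt}=s+r_TT\left(1-\frac{T+I}{T_{\max}}\right)-dT-\frac{bTV}{T+I}$, $\frac{dI}{dt}=r_II\left(1-\frac{T+I}{T_{\max}}\right)+\frac{bTV}{T+I}-\delta I$, $\frac{dV}{dt}=\rho R^*I-cV-\frac{bTV}{T+I}$. There exist parameter values for which ${\cal R}_0<1$ and there exist exactly two positive steady states, one stable and one unstable. There is a variation of parameters under which these two steady states coalesce in a generic fold bifurcation.
   Context: Parameters $s,r_T,T_{\max},d,b,r_I,\delta,\rho,R^*,c$ are positive constants. Let $p_0=\left(r_T-d+\sqrt{(r_T-d)^2+\frac{4sr_T}{T_{\max}}}\right)\frac{T_{\max}}{2r_T}$; the disease-free equilibrium is $(T,I,V)=(p_0,0,0)$. For parameters with $\delta>r_I(1-p_0/T_{\max})$ the basic reproductive ratio is ${\cal R}_0=\frac{b\rho R^*}{(b+c)\left(\delta-r_I(1-\frac{p_0}{T_{\max}})\right)}$. A positive steady state is a steady state with $T,I,V>0$; a generic fold bifurcation is a non-degenerate saddle-node bifurcation. *)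

theory Defs
  imports "HOL-Analysis.Analysis"
begin

record params =
  s_p :: real
  rT :: real
  Tmax :: real
  d_p :: real
  b_p :: real
  rI :: real
  delta :: real
  rho :: real
  Rstar :: real
  c_p :: real

definition pos_params :: "params \<Rightarrow> bool" where
  "pos_params p \<longleftrightarrow> s_p p > 0 \<and> rT p > 0 \<and> Tmax p > 0 \<and> d_p p > 0 \<and> b_p p > 0 \<and>
     rI p > 0 \<and> delta p > 0 \<and> rho p > 0 \<and> Rstar p > 0 \<and> c_p p > 0"

definition field :: "params \<Rightarrow> real^3 \<Rightarrow> real^3" where
  "field p x = (let T = x$1; I = x$2; V = x$3 in
     vector [ s_p p + rT p * T * (1 - (T + I) / Tmax p) - d_p p * T - b_p p * T * V / (T + I),
              rI p * I * (1 - (T + I) / Tmax p) + b_p p * T * V / (T + I) - delta p * I,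
              rho p * Rstar p * I - c_p p * V - b_p p * T * V / (T + I) ])"

definition positive_state :: "real^3 \<Rightarrow> bool" where
  "positive_state x \<longleftrightarrow> x$1 > 0 \<and> x$2 > 0 \<and> x$3 > 0"

definition pos_steady_states :: "params \<Rightarrow> (real^3) set" where
  "pos_steady_states p = {x. positive_state x \<and> field p x = 0}"

definition p0 :: "params \<Rightarrow> real" where
  "p0 p = (rT p - d_p p + sqrt ((rT p - d_p p)^2 + 4 * s_p p * rT p / Tmax p)) * Tmax p / (2 * rT p)"

definition R0 :: "params \<Rightarrow> real" where
  "R0 p = b_p p * rho p * Rstar p /
          ((b_p p + c_p p) * (delta p - rI p * (1 - p0 p / Tmax p)))"

definition jac :: "params \<Rightarrow> real^3 \<Rightarrow> real^3^3" where
  "jac p x = matrix (frechet_derivative (field p) (at x))"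

definition charpoly :: "real^3^3 \<Rightarrow> complex \<Rightarrow> complex" where
  "charpoly A z = det (\<chi> i j. (if i = j then z else 0) - complex_of_real (A $ i $ j))"

definition stable_ss :: "params \<Rightarrow> real^3 \<Rightarrow> bool" where
  "stable_ss p x \<longleftrightarrow> field p differentiable (at x) \<and>
     (\<forall>z. charpoly (jac p x) z = 0 \<longrightarrow> Re z < 0)"

definition unstable_ss :: "params \<Rightarrow> real^3 \<Rightarrow> bool" where
  "unstable_ss p x \<longleftrightarrow> field p differentiable (at x) \<and>
     (\<exists>z. charpoly (jac p x) z = 0 \<and> Re z > 0)"

definition C1_fun :: "(real \<Rightarrow> real) \<Rightarrow> bool" where
  "C1_fun f \<longleftrightarrow> (\<exists>f'. (\<forall>t. (f has_real_derivative f' t) (at t)) \<and> continuous_on UNIV f')"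

definition smooth_variation :: "(real \<Rightarrow> params) \<Rightarrow> bool" where
  "smooth_variation \<pi> \<longleftrightarrow>
     C1_fun (s_p \<circ> \<pi>) \<and> C1_fun (rT \<circ> \<pi>) \<and> C1_fun (Tmax \<circ> \<pi>) \<and> C1_fun (d_p \<circ> \<pi>) \<and>
     C1_fun (b_p \<circ> \<pi>) \<and> C1_fun (rI \<circ> \<pi>) \<and> C1_fun (delta \<circ> \<pi>) \<and> C1_fun (rho \<circ> \<pi>) \<and>
     C1_fun (Rstar \<circ> \<pi>) \<and> C1_fun (c_p \<circ> \<pi>)"

text \<open>Generic (non-degenerate) fold / saddle-node bifurcation of the family
  x' = field (\<pi> mu) x at (xs, mus) (Kuznetsov's conditions):
  equilibrium; 0 is a simple eigenvalue of the Jacobian and no other eigenvalue is on the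
  imaginary axis; with A v = 0, w^T A = 0 (v, w nonzero):
  w . D2_x f(v,v) \<noteq> 0 and w . d f / d mu \<noteq> 0.\<close>
definition generic_fold :: "(real \<Rightarrow> params) \<Rightarrow> real \<Rightarrow> real^3 \<Rightarrow> bool" where
  "generic_fold \<pi> mus xs \<longleftrightarrow>
     field (\<pi> mus) xs = 0 \<and>
     field (\<pi> mus) differentiable (at xs) \<and>
     charpoly (jac (\<pi> mus) xs) 0 = 0 \<and>
     deriv (charpoly (jac (\<pi> mus) xs)) 0 \<noteq> 0 \<and>
     (\<forall>z. charpoly (jac (\<pi> mus) xs) z = 0 \<and> Re z = 0 \<longrightarrow> z = 0) \<and>
     (\<exists>v w. v \<noteq> 0 \<and> w \<noteq> 0 \<and> jac (\<pi> mus) xs *v v = 0 \<and> w v* jac (\<pi> mus) xs = 0 \<and>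
        deriv (deriv (\<lambda>t. w \<bullet> field (\<pi> mus) (xs + t *\<^sub>R v))) 0 \<noteq> 0 \<and>
        deriv (\<lambda>mu. w \<bullet> field (\<pi> mu) xs) mus \<noteq> 0)"

end

theory Submission
  imports Defs
begin

definition pp :: "real \<Rightarrow> real \<Rightarrow> params" where
  "pp s d = \<lparr>s_p = s, rT = 1, Tmax = 6, d_p = d, b_p = 2, rI = 6, delta = 6, rho = 3, Rstar = 1, c_p = 2\<rparr>"

definition qf :: "real^3 \<Rightarrow> real" where "qf x = x$1 * x$3 / (x$1 + x$2)"

lemma field_pp: "field (pp s d) x = vector [s + x$1*(1-(x$1+x$2)*(1/6)) - d*x$1 - 2*qf x,
   6*x$2*(1-(x$1+x$2)*(1/6)) + 2*qf x - 6*x$2, 3*x$2 - 2*x$3 - 2*qf x]"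
  by (simp add: field_def pp_def Let_def qf_def mult.assoc)

definition st :: "real \<Rightarrow> real^3" where
  "st N = vector [N^2/(3-N), N*(3-2*N)/(3-N), N*(3-2*N)/2]"

definition cubf :: "real \<Rightarrow> real \<Rightarrow> real \<Rightarrow> real" where
  "cubf s d N = 11/6*N^3 - (2+d)*N^2 - s*N + 3 * s"

lemma st_facts: assumes "N \<noteq> 3"
  shows "st N $ 1 * (3 - N) = N^2" "st N $ 2 * (3 - N) = N*(3-2*N)" "2 * st N $ 3 = N*(3-2*N)"
        "st N $ 1 + st N $ 2 = N"
proof -
  have n: "3 - N \<noteq> 0" using assms by simp
  show a: "st N $ 1 * (3 - N) = N^2" "st N $ 2 * (3 - N) = N*(3-2*N)" "2 * st N $ 3 = N*(3-2*N)"
    unfolding st_def using n by simp_all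
  have "(st N $ 1 + st N $ 2) * (3 - N) = N * (3 - N)" using a(1,2) by (simp add: algebra_simps power2_eq_square)
  thus "st N $ 1 + st N $ 2 = N" using n by simp
qed

lemma st_inj: "N \<noteq> 3 \<Longrightarrow> M \<noteq> 3 \<Longrightarrow> st N = st M \<Longrightarrow> N = M"
  by (metis st_facts(4))

lemma steady_st:
  assumes "0 < N" "N < 3/2" "cubf s d N = 0"
  shows "field (pp s d) (st N) = 0 \<and> positive_state (st N)"
proof
  have N3: "3 - N \<noteq> 0" "3 - N > 0" "N \<noteq> 3" using assms by auto
  define T I V where "T = st N $ 1" "I = st N $ 2" "V = st N $ 3"
  have tT: "T*(3-N) = N^2" and tI: "I*(3-N) = N*(3-2*N)" and tV: "2*V = N*(3-2*N)" and sum: "T + I = N"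
    using st_facts[OF N3(3)] unfolding T_I_V_def by auto
  have q: "qf (st N) = T*V/N" unfolding qf_def T_I_V_def[symmetric] sum by simp
  have "(2*T*V) * (3-N) = (I*N^2) * (3-N)" using tT tI tV by algebra
  hence "2*T*V = I*N^2" using N3 by simp
  hence qq: "2*(T*V/N) = I*N" using assms(1) by (simp add: field_simps power2_eq_square)
  have e: "6* s*(3-N) + N^2*(-12 - 6*d + 11*N) = 0" using assms(3) unfolding cubf_def
    by (simp add: algebra_simps power2_eq_square power3_eq_cube)
  have f1: "(6* s + T*(6-N) - 6*d*T - 6*I*N) * (3-N) = 0" using tT tI e by algebra
  have f3: "(3*I - 2*V - I*N) * (3-N) = 0" using tI tV by algebra
  have h1: "6 * s + T*(6-N) - 6*d*T - 6*I*N = 0" using f1 N3 by simp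
  have "s + T*(1-N*(1/6)) - d*T - I*N = (6 * s + T*(6-N) - 6*d*T - 6*I*N)/6" by (simp add: field_simps)
  hence E1: "s + T*(1-N*(1/6)) - d*T - 2*(T*V/N) = 0" using h1 qq by simp
  have E2: "6*I*(1-N*(1/6)) + 2*(T*V/N) - 6*I = 0" using qq sum by (simp add: algebra_simps)
  have h3: "3*I - 2*V - I*N = 0" using f3 N3 by simp
  hence E3: "3*I - 2*V - 2*(T*V/N) = 0" using qq by simp
  show "field (pp s d) (st N) = 0"
    unfolding field_pp q using E1 E2 E3 unfolding T_I_V_def sum[unfolded T_I_V_def]
    by (simp add: vec_eq_iff forall_3)
  show "positive_state (st N)"
    unfolding positive_state_def st_def using assms N3 by (simp add: field_simps)
qed

lemma uniq_st:
  assumes "positive_state x" "field (pp s d) x = 0"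
  shows "x = st (x$1 + x$2) \<and> x$1 + x$2 < 3/2 \<and> cubf s d (x$1 + x$2) = 0"
proof -
  define T I V N where "T = x$1" "I = x$2" "V = x$3" "N = x$1 + x$2"
  have pos: "T > 0" "I > 0" "V > 0" "N > 0" using assms(1) unfolding positive_state_def T_I_V_N_def by auto
  have q: "qf x = T*V/N" unfolding qf_def T_I_V_N_def by simp
  have NN: "N = T + I" unfolding T_I_V_N_def by simp
  have e1: "s + T*(1-N*(1/6)) - d*T - 2*(T*V/N) = 0"
   and e2: "6*I*(1-N*(1/6)) + 2*(T*V/N) - 6*I = 0"
   and e3: "3*I - 2*V - 2*(T*V/N) = 0"
    using assms(2) unfolding field_pp q vec_eq_iff forall_3 T_I_V_N_def by simp_all
  have qq: "2*(T*V/N) = I*N" using e2 by (simp add: algebra_simps)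
  have f2: "2*T*V = I*N^2" using qq pos by (simp add: field_simps power2_eq_square)
  have f3: "2*V = I*(3-N)" using e3 qq by (simp add: algebra_simps)
  have "I*(T*(3-N)) = I*N^2" using f2 f3 by algebra
  hence f4: "T*(3-N) = N^2" using pos by simp
  have "I*(3-N) > 0" using f3 pos by simp
  hence N3: "N < 3" using pos by (simp add: zero_less_mult_iff)
  have T: "T = N^2/(3-N)" using f4 N3 by (simp add: field_simps)
  have fI: "I*(3-N) = N*(3-2*N)" using f4 NN by algebra
  have I: "I = N*(3-2*N)/(3-N)" using fI N3 by (simp add: field_simps)
  have "I*(3-N) > 0" using pos N3 by simp
  hence "N*(3-2*N) > 0" using fI by simp
  hence N32: "N < 3/2" using pos by (simp add: zero_less_mult_iff)
  have "2*V = N*(3-2*N)" using f3 fI by simp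
  hence V: "V = N*(3-2*N)/2" by simp
  have c: "cubf s d N = 0"
  proof -
    have h: "6* s + T*(6-N) - 6*d*T - 6*I*N = 0" using e1 qq by (simp add: algebra_simps)
    have "(6* s + T*(6-N) - 6*d*T - 6*I*N)*(3-N) = 6*(cubf s d N)"
      unfolding cubf_def using f4 fI by algebra
    thus ?thesis using h by simp
  qed
  have "x = st N" unfolding st_def vec_eq_iff forall_3 using T I V T_I_V_N_def by simp
  thus ?thesis using c N32 T_I_V_N_def by simp
qed

lemma vector3_axis: "(vector [a, b, c] :: real^3) = a *\<^sub>R axis 1 1 + b *\<^sub>R axis 2 1 + c *\<^sub>R axis 3 1"
  by (simp add: vec_eq_iff forall_3 axis_def)

lemma nth_deriv: "((\<lambda>x::real^3. x$i) has_derivative (\<lambda>h. h$i)) F"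
  by (simp add: bounded_linear_vec_nth bounded_linear_imp_has_derivative)

lemma deriv_q: assumes "x$1 + x$2 \<noteq> 0"
  shows "(qf has_derivative
     (\<lambda>h. (x$3*x$2/(x$1+x$2)^2) * h$1 - (x$1*x$3/(x$1+x$2)^2) * h$2 + (x$1/(x$1+x$2)) * h$3)) (at x)"
  unfolding qf_def[abs_def]
  apply (rule has_derivative_eq_rhs)
   apply (rule has_derivative_divide has_derivative_mult has_derivative_add nth_deriv)+
   apply (rule assms)
  apply (rule ext)
  using assms apply (simp add: divide_simps) apply (simp add: algebra_simps power2_eq_square)
  done

definition J :: "real \<Rightarrow> real^3 \<Rightarrow> real^3^3" where
 "J d x = (let T = x$1; I = x$2; V = x$3; N = x$1 + x$2 in
   vector [vector [1 - N/6 - T/6 - d - 2*V*I/N^2, -T/6 + 2*T*V/N^2, -2*T/N],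
           vector [-I + 2*V*I/N^2, -N - I - 2*T*V/N^2, 2*T/N],
           vector [-2*V*I/N^2, 3 + 2*T*V/N^2, -2 - 2*T/N]])"

lemma field_deriv: assumes "x$1 + x$2 \<noteq> 0"
  shows "(field (pp s d) has_derivative (\<lambda>h. J d x *v h)) (at x)"
proof -
  note dq = deriv_q[OF assms]
  show ?thesis
    unfolding field_pp[abs_def] vector3_axis
    apply (rule has_derivative_eq_rhs)
     apply (rule derivative_intros nth_deriv dq)+
    apply (rule ext)
    apply (simp add: vec_eq_iff forall_3 axis_def J_def matrix_vector_mult_def sum_3 Let_def)
    apply (simp add: algebra_simps)
    done
qed

lemma jac_pp: assumes "x$1 + x$2 \<noteq> 0" shows "jac (pp s d) x = J d x"
  unfolding jac_def using frechet_derivative_at[OF field_deriv[OF assms]]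
  by (metis matrix_of_matrix_vector_mul)

lemma charpoly_vec:
  "charpoly (vector [vector [a11,a12,a13], vector[a21,a22,a23], vector[a31,a32,a33]]) z =
    z^3 - of_real (a11+a22+a33) * z^2 + of_real (a11*a22 - a12*a21 + a11*a33 - a13*a31 + a22*a33 - a23*a32) * z
    - of_real (a11*a22*a33 + a12*a23*a31 + a13*a21*a32 - a11*a23*a32 - a12*a21*a33 - a13*a22*a31)"
  unfolding charpoly_def det_3
  by (simp add: algebra_simps power2_eq_square power3_eq_cube)

lemma RH3:
  fixes a b c :: real and z :: complex
  assumes "z^3 + of_real a * z^2 + of_real b * z + of_real c = 0" "a > 0" "c > 0" "a*b > c"
  shows "Re z < 0"
proof (rule ccontr)
  assume "\<not> Re z < 0"
  hence x0: "Re z \<ge> 0" by simp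
  obtain x y where z: "z = Complex x y" by (cases z)
  have re: "x^3 - 3*x*y^2 + a*(x^2 - y^2) + b*x + c = 0" and im: "3*x^2*y - y^3 + 2*a*x*y + b*y = 0"
    using assms(1) unfolding z complex_eq_iff
    by (simp_all add: power2_eq_square power3_eq_cube algebra_simps)
  have x: "x \<ge> 0" using x0 z by simp
  have b: "b > 0" using assms(2,3,4) by (metis mult_pos_pos not_less_iff_gr_or_eq order_less_trans zero_less_mult_pos)
  show False
  proof (cases "y = 0")
    case True
    with re have "x^3 + a*x^2 + b*x + c = 0" by simp
    moreover have "x^3 + a*x^2 + b*x + c > 0" using x assms b by (simp add: add_nonneg_pos add_nonneg_nonneg)
    ultimately show False by simp
  next
    case False
    from im have "y * (3*x^2 - y^2 + 2*a*x + b) = 0" by (simp add: algebra_simps power2_eq_square power3_eq_cube)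
    with False have y2: "y^2 = 3*x^2 + 2*a*x + b" by simp
    from re have "x^3 - 3*x*y^2 + a*x^2 - a*y^2 + b*x + c = 0" by (simp add: algebra_simps)
    hence "-8*x^3 - 8*a*x^2 - (2*b+2*a^2)*x + (c - a*b) = 0" unfolding y2 by (simp add: algebra_simps power2_eq_square power3_eq_cube)
    moreover have "-8*x^3 - 8*a*x^2 - (2*b+2*a^2)*x \<le> 0"
    proof -
      have "x^3 \<ge> 0" "a*x^2 \<ge> 0" "(2*b+2*a^2)*x \<ge> 0" using x assms(2) b by simp_all
      thus ?thesis by linarith
    qed
    ultimately show False using assms(4) by linarith
  qed
qed


definition P0 :: params where "P0 = pp (11/45) (91/180)"

lemma cub0: "cubf (11/45) (91/180) N = 11/6 * (N + 1/2) * (N - 6/5) * (N - 2/3)"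
  unfolding cubf_def by (simp add: field_simps power2_eq_square power3_eq_cube)

lemma st23: "st (2/3) = vector [4/21, 10/21, 5/9]"
  unfolding st_def by (simp add: vec_eq_iff forall_3 power2_eq_square)
lemma st65: "st (6/5) = vector [4/5, 2/5, 9/25]"
  unfolding st_def by (simp add: vec_eq_iff forall_3 power2_eq_square)
lemma st67: "st (6/7) = vector [12/35, 18/35, 27/49]"
  unfolding st_def by (simp add: vec_eq_iff forall_3 power2_eq_square)

lemma J_x1: "J (91/180) (st (2/3)) = vector [vector [-151/180, 4/9, -4/7], vector [5/7, -34/21, 4/7], vector [-25/21, 73/21, -18/7]]"
  unfolding st23 J_def Let_def by (simp add: power2_eq_square)
lemma J_x2: "J (91/180) (st (6/5)) = vector [vector [-7/180, 4/15, -4/3], vector [-1/5, -2, 4/3], vector [-1/5, 17/5, -10/3]]"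
  unfolding st65 J_def Let_def by (simp add: power2_eq_square)
lemma J_xs: "J (19/84) (st (6/7)) = vector [vector [-83/420, 16/35, -4/5], vector [9/35, -66/35, 4/5], vector [-27/35, 123/35, -14/5]]"
  unfolding st67 J_def Let_def by (simp add: power2_eq_square)

lemma cp_x1: "charpoly (J (91/180) (st (2/3))) z = z^3 + of_real (6337/1260) * z^2 + of_real (31054/6615) * z + of_real (44/27)"
  unfolding J_x1 charpoly_vec by simp
lemma cp_x2: "charpoly (J (91/180) (st (6/5))) z = z^3 + of_real (967/180) * z^2 + of_real (1436/675) * z - of_real (748/675)"
  unfolding J_x2 charpoly_vec by simp
lemma cp_xs: "charpoly (J (19/84) (st (6/7))) z = z^3 + of_real (293/60) * z^2 + of_real (391/147) * z"
  unfolding J_xs charpoly_vec by simp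

lemma jac_st: assumes "0 < N" "N < 3/2" shows "jac (pp s d) (st N) = J d (st N)"
  "field (pp s d) differentiable (at (st N))"
proof -
  have "st N $ 1 + st N $ 2 \<noteq> 0" using st_facts(4)[of N] assms by simp
  thus "jac (pp s d) (st N) = J d (st N)" "field (pp s d) differentiable (at (st N))"
    using jac_pp field_deriv differentiableI by blast+
qed

lemma stable_x1: "stable_ss P0 (st (2/3))"
  unfolding stable_ss_def P0_def jac_st[of "2/3", simplified] cp_x1
  using jac_st(2)[of "2/3"] RH3[of _ "6337/1260" "31054/6615" "44/27"] by simp

lemma unstable_x2: "unstable_ss P0 (st (6/5))"
proof -
  define f where "f t = t^3 + 967/180 * t^2 + 1436/675 * t - 748/675" for t :: real
  have "\<exists>t. 0 \<le> t \<and> t \<le> 1 \<and> f t = 0"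
    by (rule IVT) (auto simp: f_def intro!: continuous_intros)
  then obtain t where t: "0 \<le> t" "t \<le> 1" "f t = 0" by blast
  have "t \<noteq> 0" using t(3) by (auto simp: f_def)
  hence tp: "t > 0" using t(1) by simp
  have "charpoly (J (91/180) (st (6/5))) (of_real t) = of_real (f t)"
    unfolding cp_x2 f_def by simp
  hence "charpoly (J (91/180) (st (6/5))) (of_real t) = 0" using t(3) by simp
  thus ?thesis
    unfolding unstable_ss_def P0_def jac_st[of "6/5", simplified]
    using jac_st(2)[of "6/5"] tp by force
qed


lemma base_set: "pos_steady_states P0 = {st (2/3), st (6/5)}"
proof
  show "pos_steady_states P0 \<subseteq> {st (2/3), st (6/5)}"
  proof
    fix x assume "x \<in> pos_steady_states P0"
    hence x: "positive_state x" "field (pp (11/45) (91/180)) x = 0"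
      unfolding pos_steady_states_def P0_def by auto
    from uniq_st[OF x] have u: "x = st (x$1 + x$2)" "cubf (11/45) (91/180) (x$1 + x$2) = 0" by auto
    have pos: "x$1 + x$2 > 0" using x(1) unfolding positive_state_def by simp
    from u(2) have "x$1 + x$2 = 6/5 \<or> x$1 + x$2 = 2/3" using pos unfolding cub0 by auto
    thus "x \<in> {st (2/3), st (6/5)}" using u(1) by (metis insert_iff)
  qed
  show "{st (2/3), st (6/5)} \<subseteq> pos_steady_states P0"
    using steady_st[of "2/3" "11/45" "91/180"] steady_st[of "6/5" "11/45" "91/180"]
    unfolding pos_steady_states_def P0_def cub0 by auto
qed

lemma st_ne: "st (2/3) \<noteq> st (6/5)"
  using st_inj[of "2/3" "6/5"] by auto

lemma p0_P0: "p0 P0 \<ge> 89/30"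
proof -
  have "sqrt ((1 - 91/180)^2 + 4 * (11/45) * 1 / 6) \<ge> 89/180"
    by (rule real_le_rsqrt) (simp add: power2_eq_square)
  thus ?thesis unfolding p0_def P0_def pp_def by simp
qed

lemma R0_P0: "R0 P0 < 1" "delta P0 > rI P0 * (1 - p0 P0 / Tmax P0)"
proof -
  have p: "p0 P0 \<ge> 89/30" by (rule p0_P0)
  have "R0 P0 = 6 / (4 * (6 - 6 * (1 - p0 P0 / 6)))" unfolding R0_def P0_def pp_def by simp
  also have "\<dots> = 3 / (2 * p0 P0)" by (simp add: field_simps)
  also have "\<dots> < 1" using p by (simp add: field_simps)
  finally show "R0 P0 < 1" .
  show "delta P0 > rI P0 * (1 - p0 P0 / Tmax P0)" using p unfolding P0_def pp_def by simp
qed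

lemma pos_pp: "pos_params (pp s d) \<longleftrightarrow> s > 0 \<and> d > 0"
  unfolding pos_params_def pp_def by simp

definition sf :: "real \<Rightarrow> real" where "sf mu = 11/45 - mu/14"
definition df :: "real \<Rightarrow> real" where "df mu = 91/180 - mu"
definition pif :: "real \<Rightarrow> params" where "pif mu = pp (sf mu) (df mu)"
definition muS :: real where "muS = 88/315"

lemma pif0: "pif 0 = P0" unfolding pif_def P0_def sf_def df_def by simp
lemma pif_mus: "pif muS = pp (11/49) (19/84)" unfolding pif_def muS_def sf_def df_def by simp

lemma C1_affine: "C1_fun (\<lambda>x. a + b * x)"
  unfolding C1_fun_def
  by (rule exI[of _ "\<lambda>_. b"]) (auto intro!: derivative_eq_intros)

lemma smooth_pif: "smooth_variation pif"
proof -
  have c: "C1_fun (\<lambda>x. a)" for a using C1_affine[of a 0] by simp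
  have "(s_p \<circ> pif) = (\<lambda>x. 11/45 + (-1/14) * x)" "(d_p \<circ> pif) = (\<lambda>x. 91/180 + (-1) * x)"
    unfolding pif_def sf_def df_def pp_def by (auto simp: fun_eq_iff)
  moreover have "(rT \<circ> pif) = (\<lambda>x. 1)" "(Tmax \<circ> pif) = (\<lambda>x. 6)" "(b_p \<circ> pif) = (\<lambda>x. 2)"
    "(rI \<circ> pif) = (\<lambda>x. 6)" "(delta \<circ> pif) = (\<lambda>x. 6)" "(rho \<circ> pif) = (\<lambda>x. 3)"
    "(Rstar \<circ> pif) = (\<lambda>x. 1)" "(c_p \<circ> pif) = (\<lambda>x. 2)"
    unfolding pif_def pp_def by (auto simp: fun_eq_iff)
  ultimately show ?thesis unfolding smooth_variation_def using c C1_affine by metis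
qed

lemma pos_pif: "mu \<in> {0..muS} \<Longrightarrow> pos_params (pif mu)"
  unfolding pif_def pos_pp sf_def df_def muS_def by auto


definition Bq :: "real \<Rightarrow> real" where "Bq mu = 616/15 - 12*mu"
definition Cq :: "real \<Rightarrow> real" where "Cq mu = 88/5 - 36*mu/7"
definition Dq :: "real \<Rightarrow> real" where "Dq mu = (Bq mu)^2 - 88 * Cq mu"
definition Nm :: "real \<Rightarrow> real" where "Nm mu = (Bq mu - sqrt (Dq mu))/44"
definition Np :: "real \<Rightarrow> real" where "Np mu = (Bq mu + sqrt (Dq mu))/44"

lemma Dq_fact: "Dq mu = 144 * (88/315 - mu) * (154/45 - mu)"
  unfolding Dq_def Bq_def Cq_def by (simp add: field_simps power2_eq_square)

lemma cub_path: "cubf (sf mu) (df mu) N = (N + 1/2) * (22*N^2 - Bq mu * N + Cq mu) / 12"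
  unfolding cubf_def sf_def df_def Bq_def Cq_def by (simp add: field_simps power2_eq_square power3_eq_cube)

lemma quad_root:
  fixes r B C N e :: real
  assumes "r^2 = B^2 - 88*C" "N = (B + e*r)/44" "e = 1 \<or> e = -1"
  shows "22*N^2 - B*N + C = 0"
proof -
  have ee: "e^2 = 1" using assms(3) by auto
  have "22*N^2 - B*N + C = (e^2*r^2 - B^2 + 88*C)/88" unfolding assms(2)
    by (simp add: field_simps power2_eq_square)
  thus ?thesis using assms(1) ee by simp
qed

lemma branch:
  assumes "mu \<in> {0..<muS}"
  shows "0 < Nm mu" "Nm mu < Np mu" "Np mu < 3/2"
        "cubf (sf mu) (df mu) (Nm mu) = 0" "cubf (sf mu) (df mu) (Np mu) = 0"
proof -
  have mu: "0 \<le> mu" "mu < 88/315" using assms unfolding muS_def by auto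
  have Dp: "Dq mu > 0" unfolding Dq_fact using mu by (simp add: mult_pos_pos)
  define r where "r = sqrt (Dq mu)"
  have r: "r > 0" "r^2 = Dq mu" unfolding r_def using Dp by simp_all
  have B: "Bq mu > 0" "Bq mu \<le> 616/15" using mu unfolding Bq_def by auto
  have C: "Cq mu > 0" using mu unfolding Cq_def by auto
  have "r < Bq mu"
  proof -
    have "r^2 < (Bq mu)^2" using r C unfolding Dq_def by simp
    thus ?thesis using B(1) r(1) by (simp add: power_less_imp_less_base)
  qed
  thus "0 < Nm mu" unfolding Nm_def r_def[symmetric] by simp
  show "Nm mu < Np mu" unfolding Nm_def Np_def r_def[symmetric] using r by simp
  have "r < 66 - Bq mu"
  proof -
    have "132 * Bq mu - 88 * Cq mu < 4356" using mu unfolding Bq_def Cq_def by simp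
    hence "r^2 < (66 - Bq mu)^2" using r unfolding Dq_def by (simp add: power2_eq_square algebra_simps)
    thus ?thesis using B r(1) by (simp add: power_less_imp_less_base)
  qed
  thus "Np mu < 3/2" unfolding Np_def r_def[symmetric] by simp
  have q1: "22*(Nm mu)^2 - Bq mu * Nm mu + Cq mu = 0"
    by (rule quad_root[of r _ _ _ "-1"]) (use r in \<open>simp_all add: Dq_def Nm_def r_def\<close>)
  have q2: "22*(Np mu)^2 - Bq mu * Np mu + Cq mu = 0"
    by (rule quad_root[of r _ _ _ "1"]) (use r in \<open>simp_all add: Dq_def Np_def r_def\<close>)
  show "cubf (sf mu) (df mu) (Nm mu) = 0" "cubf (sf mu) (df mu) (Np mu) = 0"
    unfolding cub_path using q1 q2 by simp_all
qed

lemma branch_ss: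
  assumes "mu \<in> {0..<muS}"
  shows "st (Nm mu) \<in> pos_steady_states (pif mu)" "st (Np mu) \<in> pos_steady_states (pif mu)"
        "st (Nm mu) \<noteq> st (Np mu)"
proof -
  note b = branch[OF assms]
  show "st (Nm mu) \<in> pos_steady_states (pif mu)" "st (Np mu) \<in> pos_steady_states (pif mu)"
    unfolding pos_steady_states_def pif_def using steady_st b by auto
  show "st (Nm mu) \<noteq> st (Np mu)" using st_inj[of "Nm mu" "Np mu"] b by auto
qed

lemma Nm0: "Nm 0 = 2/3" and Np0: "Np 0 = 6/5"
proof -
  have "sqrt (Dq 0) = 176/15" by (rule real_sqrt_unique) (simp_all add: Dq_def Bq_def Cq_def power2_eq_square)
  thus "Nm 0 = 2/3" "Np 0 = 6/5" unfolding Nm_def Np_def Bq_def by simp_all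
qed

lemma Nmus: "Nm muS = 6/7" "Np muS = 6/7"
proof -
  have "Dq muS = 0" unfolding Dq_fact muS_def by simp
  thus "Nm muS = 6/7" "Np muS = 6/7" unfolding Nm_def Np_def Bq_def muS_def by simp_all
qed

lemma cont_branch: "continuous_on {0..<muS} (\<lambda>mu. st (Nm mu))" "continuous_on {0..<muS} (\<lambda>mu. st (Np mu))"
proof -
  have n: "\<forall>mu\<in>{0..<muS}. 3 - Nm mu \<noteq> 0" "\<forall>mu\<in>{0..<muS}. 3 - Np mu \<noteq> 0"
    using branch by fastforce+
  show "continuous_on {0..<muS} (\<lambda>mu. st (Nm mu))" "continuous_on {0..<muS} (\<lambda>mu. st (Np mu))"
    unfolding st_def vector3_axis Nm_def[abs_def] Np_def[abs_def] Dq_def[abs_def] Bq_def[abs_def] Cq_def[abs_def]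
    using n unfolding Nm_def Np_def Dq_def Bq_def Cq_def
    by (auto intro!: continuous_intros)
qed

lemma lim_branch: "((\<lambda>mu. st (Nm mu)) \<longlongrightarrow> st (6/7)) (at_left muS)" "((\<lambda>mu. st (Np mu)) \<longlongrightarrow> st (6/7)) (at_left muS)"
proof -
  have "((\<lambda>mu. st (Nm mu)) \<longlongrightarrow> st (Nm muS)) (at_left muS)"
    unfolding st_def vector3_axis Nm_def Dq_def Bq_def Cq_def
    by (intro tendsto_intros) (simp_all add: muS_def power2_eq_square)
  thus "((\<lambda>mu. st (Nm mu)) \<longlongrightarrow> st (6/7)) (at_left muS)" using Nmus by simp
  have "((\<lambda>mu. st (Np mu)) \<longlongrightarrow> st (Np muS)) (at_left muS)"
    unfolding st_def vector3_axis Np_def Dq_def Bq_def Cq_def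
    by (intro tendsto_intros) (simp_all add: muS_def power2_eq_square)
  thus "((\<lambda>mu. st (Np mu)) \<longlongrightarrow> st (6/7)) (at_left muS)" using Nmus by simp
qed


definition vv :: "real^3" where "vv = vector [-336, -14, 75]"
definition ww :: "real^3" where "ww = vector [-108, 67, 50]"

definition Tt :: "real \<Rightarrow> real" where "Tt t = 12/35 - 336*t"
definition It :: "real \<Rightarrow> real" where "It t = 18/35 - 14*t"
definition Vt :: "real \<Rightarrow> real" where "Vt t = 27/49 + 75*t"

lemma line: "st (6/7) + t *\<^sub>R vv = vector [Tt t, It t, Vt t]"
  unfolding st67 vv_def Tt_def It_def Vt_def by (simp add: vec_eq_iff forall_3)

lemma ww_field: "ww \<bullet> field (pp s d) x = -108 * s + 108 * d * x$1 + ww \<bullet> field (pp 0 0) x"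
  unfolding ww_def field_pp by (simp add: inner_vec_def sum_3 algebra_simps)

definition Pq :: "real \<Rightarrow> real" where "Pq t = (12/35 - 336*t)*(27/49 + 75*t)"

definition phi :: "real \<Rightarrow> real" where
  "phi t = -2700/49 + 24000*t + 1788500*t^2 + 250*(Pq t/(6/7 - 350*t))"

definition Pd :: "real \<Rightarrow> real" where "Pd t = (-336)*(27/49 + 75*t) + 75*(12/35 - 336*t)"

definition phi1 :: "real \<Rightarrow> real" where
  "phi1 t = (24000 + 3577000*t) + 250*((Pd t * (6/7 - 350*t) - (-350) * Pq t) / (6/7 - 350*t) ^ Suc (Suc 0))"

lemma phi_eq: "(\<lambda>t. ww \<bullet> field (pp (11/49) (19/84)) (st (6/7) + t *\<^sub>R vv)) = phi"
proof
  fix t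
  have n: "Tt t + It t = 6/7 - 350*t" "Tt t * Vt t = Pq t" unfolding Tt_def It_def Vt_def Pq_def by simp_all
  show "ww \<bullet> field (pp (11/49) (19/84)) (st (6/7) + t *\<^sub>R vv) = phi t"
    unfolding line ww_def field_pp qf_def
    apply (simp add: inner_vec_def sum_3 n)
    apply (simp add: phi_def Tt_def It_def Vt_def field_simps power2_eq_square)
    done
qed

lemma Pq_deriv: "(Pq has_real_derivative Pd t) (at t)"
  unfolding Pq_def[abs_def] Pd_def by (auto intro!: derivative_eq_intros)

lemma Pd_deriv: "(Pd has_real_derivative -50400) (at t)"
  unfolding Pd_def[abs_def] by (auto intro!: derivative_eq_intros)

lemma phi_deriv: assumes "6/7 - 350*t \<noteq> 0" shows "(phi has_real_derivative phi1 t) (at t)"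
proof -
  have d1: "((\<lambda>t. -2700/49 + 24000*t + 1788500*t^2) has_real_derivative (24000 + 3577000*t)) (at t)"
    by (auto intro!: derivative_eq_intros)
  have g: "((\<lambda>t. 6/7 - 350*t) has_real_derivative -350) (at t)" by (auto intro!: derivative_eq_intros)
  note d2 = DERIV_quotient[OF Pq_deriv g assms]
  show ?thesis unfolding phi_def[abs_def] phi1_def
    by (rule DERIV_add[OF d1 DERIV_cmult[OF d2]])
qed

lemma phi1_deriv: "(phi1 has_real_derivative -30723000) (at 0)"
  unfolding phi1_def[abs_def]
  apply (rule derivative_eq_intros Pq_deriv Pd_deriv refl)+
  apply simp
  apply (rule refl)+
  apply (simp add: Pq_def Pd_def)
  done

lemma second_deriv: "deriv (deriv phi) 0 = -30723000"
proof -
  have "eventually (\<lambda>t. t \<in> {..<1/1000}) (nhds (0::real))"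
    by (rule eventually_nhds_in_open) auto
  hence "eventually (\<lambda>t. deriv phi t = phi1 t) (nhds 0)"
  proof (rule eventually_mono)
    fix t :: real assume "t \<in> {..<1/1000}"
    hence "6/7 - 350*t \<noteq> (0::real)" by simp
    thus "deriv phi t = phi1 t" by (rule DERIV_imp_deriv[OF phi_deriv])
  qed
  hence "deriv (deriv phi) 0 = deriv phi1 0" by (rule deriv_cong_ev) simp
  also have "\<dots> = -30723000" by (rule DERIV_imp_deriv[OF phi1_deriv])
  finally show ?thesis .
qed


lemma fold_at: "generic_fold pif muS (st (6/7))"
proof -
  have N: "(0::real) < 6/7" "(6/7::real) < 3/2" by simp_all
  have f0: "field (pp (11/49) (19/84)) (st (6/7)) = 0"
    using steady_st[of "6/7" "11/49" "19/84"] by (simp add: cubf_def power2_eq_square power3_eq_cube)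
  note jj = jac_st[OF N, of "11/49" "19/84"]
  have cpf: "charpoly (J (19/84) (st (6/7))) = (\<lambda>z. z^3 + of_real (293/60) * z^2 + of_real (391/147) * z)"
    by (rule ext) (rule cp_xs)
  have dd: "((\<lambda>z::complex. z^3 + of_real (293/60) * z^2 + of_real (391/147) * z) has_field_derivative of_real (391/147)) (at 0)"
    by (auto intro!: derivative_eq_intros)
  have dcp: "deriv (charpoly (J (19/84) (st (6/7)))) 0 \<noteq> 0"
    unfolding cpf DERIV_imp_deriv[OF dd] by simp
  have im: "\<forall>z. charpoly (J (19/84) (st (6/7))) z = 0 \<and> Re z = 0 \<longrightarrow> z = 0"
  proof (intro allI impI)
    fix z assume a: "charpoly (J (19/84) (st (6/7))) z = 0 \<and> Re z = 0"
    obtain x y where z: "z = Complex x y" by (cases z)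
    have x: "x = 0" using a z by simp
    have "Re (charpoly (J (19/84) (st (6/7))) z) = - (293/60) * y^2"
      unfolding cp_xs z x by (simp add: power2_eq_square power3_eq_cube)
    hence "y = 0" using a by simp
    thus "z = 0" using z x by (simp add: complex_eq_iff)
  qed
  have v: "J (19/84) (st (6/7)) *v vv = 0" "ww v* J (19/84) (st (6/7)) = 0" "vv \<noteq> 0" "ww \<noteq> 0"
    unfolding J_xs vv_def ww_def
    by (simp_all add: matrix_vector_mult_def vector_matrix_mult_def sum_3 vec_eq_iff forall_3)
  have sd: "deriv (deriv (\<lambda>t. ww \<bullet> field (pp (11/49) (19/84)) (st (6/7) + t *\<^sub>R vv))) 0 \<noteq> 0"
    unfolding phi_eq second_deriv by simp
  have psi: "(\<lambda>mu. ww \<bullet> field (pif mu) (st (6/7))) =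
      (\<lambda>mu. -108 * (11/45 - mu/14) + 108 * (91/180 - mu) * (12/35) + ww \<bullet> field (pp 0 0) (st (6/7)))"
    unfolding pif_def sf_def df_def by (rule ext) (subst ww_field, simp add: st67)
  have dpsi: "((\<lambda>mu. -108 * (11/45 - mu/14) + 108 * (91/180 - mu) * (12/35) + ww \<bullet> field (pp 0 0) (st (6/7)))
      has_real_derivative (-1026/35)) (at muS)"
    by (auto intro!: derivative_eq_intros)
  have tr: "deriv (\<lambda>mu. ww \<bullet> field (pif mu) (st (6/7))) muS \<noteq> 0"
    unfolding psi DERIV_imp_deriv[OF dpsi] by simp
  have cp0: "charpoly (J (19/84) (st (6/7))) 0 = 0" using cp_xs[of 0] by simp
  show ?thesis
    unfolding generic_fold_def pif_mus jj(1)
    apply (intro conjI f0 jj(2) cp0 dcp im)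
    apply (rule exI[of _ vv], rule exI[of _ ww])
    using v sd tr by simp
qed

theorem theorem4:
  shows "\<exists>p. pos_params p \<and> delta p > rI p * (1 - p0 p / Tmax p) \<and> R0 p < 1 \<and>
     card (pos_steady_states p) = 2 \<and>
     (\<exists>x1 x2. pos_steady_states p = {x1, x2} \<and> stable_ss p x1 \<and> unstable_ss p x2) \<and>
     (\<exists>\<pi> mus xs y1 y2. smooth_variation \<pi> \<and> \<pi> 0 = p \<and> mus > 0 \<and>
        (\<forall>mu\<in>{0..mus}. pos_params (\<pi> mu)) \<and>
        continuous_on {0..<mus} y1 \<and> continuous_on {0..<mus} y2 \<and>
        y1 0 \<in> pos_steady_states p \<and> y2 0 \<in> pos_steady_states p \<and>
        (\<forall>mu\<in>{0..<mus}. y1 mu \<in> pos_steady_states (\<pi> mu) \<and>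
                         y2 mu \<in> pos_steady_states (\<pi> mu) \<and> y1 mu \<noteq> y2 mu) \<and>
        (y1 \<longlongrightarrow> xs) (at_left mus) \<and> (y2 \<longlongrightarrow> xs) (at_left mus) \<and>
        positive_state xs \<and> generic_fold \<pi> mus xs)"
proof (intro exI conjI)
  show "pos_params P0" unfolding P0_def pos_pp by simp
  show "delta P0 > rI P0 * (1 - p0 P0 / Tmax P0)" "R0 P0 < 1" using R0_P0 by auto
  show "card (pos_steady_states P0) = 2" unfolding base_set using st_ne by simp
  show "pos_steady_states P0 = {st (2/3), st (6/5)}" by (rule base_set)
  show "stable_ss P0 (st (2/3))" by (rule stable_x1)
  show "unstable_ss P0 (st (6/5))" by (rule unstable_x2)
  show "smooth_variation pif" by (rule smooth_pif)
  show "pif 0 = P0" by (rule pif0)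
  show "muS > 0" unfolding muS_def by simp
  show "\<forall>mu\<in>{0..muS}. pos_params (pif mu)" using pos_pif by blast
  show "continuous_on {0..<muS} (\<lambda>mu. st (Nm mu))" "continuous_on {0..<muS} (\<lambda>mu. st (Np mu))"
    by (rule cont_branch)+
  have z: "(0::real) \<in> {0..<muS}" unfolding muS_def by simp
  show "st (Nm 0) \<in> pos_steady_states P0" "st (Np 0) \<in> pos_steady_states P0"
    using branch_ss[OF z] pif0 by auto
  show "\<forall>mu\<in>{0..<muS}. st (Nm mu) \<in> pos_steady_states (pif mu) \<and>
                         st (Np mu) \<in> pos_steady_states (pif mu) \<and> st (Nm mu) \<noteq> st (Np mu)"
    using branch_ss by blast
  show "((\<lambda>mu. st (Nm mu)) \<longlongrightarrow> st (6/7)) (at_left muS)" "((\<lambda>mu. st (Np mu)) \<longlongrightarrow> st (6/7)) (at_left muS)"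
    by (rule lim_branch)+
  show "positive_state (st (6/7))" using steady_st[of "6/7" "11/49" "19/84"] by (simp add: cubf_def power2_eq_square power3_eq_cube)
  show "generic_fold pif muS (st (6/7))" by (rule fold_at)
qed

end
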